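(* Let $T\ge 2$, $U$ a finite set of men and $W_1\subseteq\cdots\subseteq W_T$ finite sets of women, each man having a strict total order over $W_T$ and each woman a strict total order over $U$. Then there is an optimal solution $(M_1,\dots,M_T)$ of $T$-A-SMP on this instance in which $M_1$ is the men-optimal stable matching of $(U,W_1)$.
   Context: $T$-A-SMP: compute matchings $M_1,\dots,M_T$ with $M_t$ stable for $(U,W_t)$ (preferences restricted) minimizing $\sum_{t=1}^{T-1}|M_t\setminus M_{t+1}|$. A matching is a set of man–woman pairs with each person in at most one pair; a blocking pair of $M$ is a pair $(u,w)\notin M$ with ($u$ unmatched or preferring $w$ to his partner) and ($w$ unmatched or preferring $u$ to her partner); stable means no blocking pair. The men-optimal stable matching gives every man his most preferred partner among those he has in some stable matching. *)

theory Defs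
  imports Main
begin

text \<open>Preferences: (a, b) \<in> Pm u means man u strictly prefers woman a to woman b;
  (x, y) \<in> Pw w means woman w strictly prefers man x to man y.\<close>

definition is_matching :: "'m set \<Rightarrow> 'w set \<Rightarrow> ('m \<times> 'w) set \<Rightarrow> bool" where
  "is_matching U W M \<longleftrightarrow> M \<subseteq> U \<times> W \<and>
     (\<forall>u w w'. (u, w) \<in> M \<longrightarrow> (u, w') \<in> M \<longrightarrow> w = w') \<and>
     (\<forall>u u' w. (u, w) \<in> M \<longrightarrow> (u', w) \<in> M \<longrightarrow> u = u')"

definition blocking_pair ::
  "('m \<Rightarrow> ('w \<times> 'w) set) \<Rightarrow> ('w \<Rightarrow> ('m \<times> 'm) set) \<Rightarrow> ('m \<times> 'w) set \<Rightarrow> 'm \<Rightarrow> 'w \<Rightarrow> bool" where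
  "blocking_pair Pm Pw M u w \<longleftrightarrow> (u, w) \<notin> M \<and>
     ((\<forall>w'. (u, w') \<notin> M) \<or> (\<exists>w'. (u, w') \<in> M \<and> (w, w') \<in> Pm u)) \<and>
     ((\<forall>u'. (u', w) \<notin> M) \<or> (\<exists>u'. (u', w) \<in> M \<and> (u, u') \<in> Pw w))"

definition stable :: "'m set \<Rightarrow> 'w set \<Rightarrow> ('m \<Rightarrow> ('w \<times> 'w) set) \<Rightarrow> ('w \<Rightarrow> ('m \<times> 'm) set)
    \<Rightarrow> ('m \<times> 'w) set \<Rightarrow> bool" where
  "stable U W Pm Pw M \<longleftrightarrow> is_matching U W M \<and>
     (\<forall>u\<in>U. \<forall>w\<in>W. \<not> blocking_pair Pm Pw M u w)"

definition men_optimal :: "'m set \<Rightarrow> 'w set \<Rightarrow> ('m \<Rightarrow> ('w \<times> 'w) set) \<Rightarrow> ('w \<Rightarrow> ('m \<times> 'm) set)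
    \<Rightarrow> ('m \<times> 'w) set \<Rightarrow> bool" where
  "men_optimal U W Pm Pw M \<longleftrightarrow> stable U W Pm Pw M \<and>
     (\<forall>M'. stable U W Pm Pw M' \<longrightarrow>
        (\<forall>u w'. (u, w') \<in> M' \<longrightarrow> (\<exists>w. (u, w) \<in> M \<and> (w = w' \<or> (w, w') \<in> Pm u))))"

definition tasmp_feasible :: "nat \<Rightarrow> 'm set \<Rightarrow> (nat \<Rightarrow> 'w set) \<Rightarrow> ('m \<Rightarrow> ('w \<times> 'w) set)
    \<Rightarrow> ('w \<Rightarrow> ('m \<times> 'm) set) \<Rightarrow> (nat \<Rightarrow> ('m \<times> 'w) set) \<Rightarrow> bool" where
  "tasmp_feasible T U W Pm Pw M \<longleftrightarrow> (\<forall>t\<in>{1..T}. stable U (W t) Pm Pw (M t))"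

definition tasmp_cost :: "nat \<Rightarrow> (nat \<Rightarrow> ('m \<times> 'w) set) \<Rightarrow> nat" where
  "tasmp_cost T M = (\<Sum>t = 1..<T. card (M t - M (Suc t)))"

definition tasmp_optimal :: "nat \<Rightarrow> 'm set \<Rightarrow> (nat \<Rightarrow> 'w set) \<Rightarrow> ('m \<Rightarrow> ('w \<times> 'w) set)
    \<Rightarrow> ('w \<Rightarrow> ('m \<times> 'm) set) \<Rightarrow> (nat \<Rightarrow> ('m \<times> 'w) set) \<Rightarrow> bool" where
  "tasmp_optimal T U W Pm Pw M \<longleftrightarrow> tasmp_feasible T U W Pm Pw M \<and>
     (\<forall>M'. tasmp_feasible T U W Pm Pw M' \<longrightarrow> tasmp_cost T M \<le> tasmp_cost T M')"

end

theory Submission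
  imports Defs
begin


lemma best_exists:
  assumes "finite S" "S \<noteq> {}" "S \<subseteq> A" "strict_linear_order_on A r"
  shows "\<exists>x\<in>S. \<forall>y\<in>S. y = x \<or> (x, y) \<in> r"
  using assms
proof (induction S rule: finite_ne_induct)
  case (singleton x) then show ?case by simp
next
  case (insert x F)
  then obtain b where b: "b \<in> F" "\<forall>y\<in>F. y = b \<or> (b, y) \<in> r" by auto
  have tr: "trans r" and tot: "total_on A r" using insert.prems by (auto simp: strict_linear_order_on_def)
  show ?case
  proof (cases "(x, b) \<in> r")
    case True
    then show ?thesis using b tr by (auto dest: transD)
  next
    case False
    have "x \<noteq> b" using b insert by auto
    then have "(b, x) \<in> r" using False tot insert.prems b by (auto simp: total_on_def)
    then show ?thesis using b by auto
  qed
qed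

locale smp =
  fixes U :: "'m set" and WW :: "'w set" and Pm :: "'m \<Rightarrow> ('w \<times> 'w) set" and Pw :: "'w \<Rightarrow> ('m \<times> 'm) set"
  assumes finU: "finite U" and finW: "finite WW"
    and pm: "\<And>u. u \<in> U \<Longrightarrow> strict_linear_order_on WW (Pm u)"
    and pw: "\<And>w. w \<in> WW \<Longrightarrow> strict_linear_order_on U (Pw w)"
begin

lemma pm_irr: "u \<in> U \<Longrightarrow> (a, a) \<notin> Pm u"
  using pm unfolding strict_linear_order_on_def irrefl_def by blast
lemma pm_trans: "u \<in> U \<Longrightarrow> (a, b) \<in> Pm u \<Longrightarrow> (b, c) \<in> Pm u \<Longrightarrow> (a, c) \<in> Pm u"
proof -
  assume "u \<in> U" "(a, b) \<in> Pm u" "(b, c) \<in> Pm u"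
  moreover have "trans (Pm u)" using pm[OF \<open>u \<in> U\<close>] unfolding strict_linear_order_on_def by blast
  ultimately show ?thesis by (blast dest: transD)
qed
lemma pm_asym: "u \<in> U \<Longrightarrow> (a, b) \<in> Pm u \<Longrightarrow> (b, a) \<notin> Pm u"
  using pm_irr pm_trans by metis
lemma pm_tot: "u \<in> U \<Longrightarrow> a \<in> WW \<Longrightarrow> b \<in> WW \<Longrightarrow> a \<noteq> b \<Longrightarrow> (a, b) \<in> Pm u \<or> (b, a) \<in> Pm u"
  using pm unfolding strict_linear_order_on_def total_on_def by blast
lemma pw_irr: "w \<in> WW \<Longrightarrow> (a, a) \<notin> Pw w"
  using pw unfolding strict_linear_order_on_def irrefl_def by blast
lemma pw_trans: "w \<in> WW \<Longrightarrow> (a, b) \<in> Pw w \<Longrightarrow> (b, c) \<in> Pw w \<Longrightarrow> (a, c) \<in> Pw w"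
proof -
  assume "w \<in> WW" "(a, b) \<in> Pw w" "(b, c) \<in> Pw w"
  moreover have "trans (Pw w)" using pw[OF \<open>w \<in> WW\<close>] unfolding strict_linear_order_on_def by blast
  ultimately show ?thesis by (blast dest: transD)
qed
lemma pw_asym: "w \<in> WW \<Longrightarrow> (a, b) \<in> Pw w \<Longrightarrow> (b, a) \<notin> Pw w"
  using pw_irr pw_trans by metis
lemma pw_tot: "w \<in> WW \<Longrightarrow> a \<in> U \<Longrightarrow> b \<in> U \<Longrightarrow> a \<noteq> b \<Longrightarrow> (a, b) \<in> Pw w \<or> (b, a) \<in> Pw w"
  using pw unfolding strict_linear_order_on_def total_on_def by blast

lemma mat_m: "is_matching U W M \<Longrightarrow> (u, w) \<in> M \<Longrightarrow> (u, w') \<in> M \<Longrightarrow> w = w'"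
  by (auto simp: is_matching_def)
lemma mat_w: "is_matching U W M \<Longrightarrow> (u, w) \<in> M \<Longrightarrow> (u', w) \<in> M \<Longrightarrow> u = u'"
  by (auto simp: is_matching_def)
lemma mat_sub: "is_matching U W M \<Longrightarrow> (u, w) \<in> M \<Longrightarrow> u \<in> U \<and> w \<in> W"
  by (auto simp: is_matching_def)

lemma nb_rule:
  assumes "stable U W Pm Pw M" "W \<subseteq> WW" "u \<in> U" "w \<in> W" "(u, w) \<notin> M"
    "(\<forall>w'. (u, w') \<notin> M) \<or> (\<exists>w'. (u, w') \<in> M \<and> (w, w') \<in> Pm u)"
  shows "\<exists>u'. (u', w) \<in> M \<and> (u', u) \<in> Pw w"
proof -
  have m: "is_matching U W M" and nb: "\<not> blocking_pair Pm Pw M u w"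
    using assms(1,3,4) unfolding stable_def by blast+
  have "\<not> ((\<forall>u'. (u', w) \<notin> M) \<or> (\<exists>u'. (u', w) \<in> M \<and> (u, u') \<in> Pw w))"
    using nb assms(5,6) unfolding blocking_pair_def by blast
  then obtain u' where u': "(u', w) \<in> M" "(u, u') \<notin> Pw w" by blast
  have "u' \<noteq> u" using u' assms(5) by blast
  moreover have "u' \<in> U" using mat_sub[OF m u'(1)] by blast
  moreover have "w \<in> WW" using assms(2,4) by blast
  ultimately have "(u', u) \<in> Pw w" using pw_tot[of w u u'] assms(3) u'(2) by blast
  then show ?thesis using u' by blast
qed

lemma nb_rule2:
  assumes "stable U W Pm Pw M" "W \<subseteq> WW" "u \<in> U" "w \<in> W" "(u, w) \<notin> M"
    "(\<forall>u'. (u', w) \<notin> M) \<or> (\<exists>u'. (u', w) \<in> M \<and> (u, u') \<in> Pw w)"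
  shows "\<exists>w'. (u, w') \<in> M \<and> (w', w) \<in> Pm u"
proof -
  have m: "is_matching U W M" and nb: "\<not> blocking_pair Pm Pw M u w"
    using assms(1,3,4) unfolding stable_def by blast+
  have "\<not> ((\<forall>w'. (u, w') \<notin> M) \<or> (\<exists>w'. (u, w') \<in> M \<and> (w, w') \<in> Pm u))"
    using nb assms(5,6) unfolding blocking_pair_def by blast
  then obtain w' where w': "(u, w') \<in> M" "(w, w') \<notin> Pm u" by blast
  have "w' \<noteq> w" using w' assms(5) by blast
  moreover have "w' \<in> WW" using mat_sub[OF m w'(1)] assms(2) by blast
  moreover have "w \<in> WW" using assms(2,4) by blast
  ultimately have "(w', w) \<in> Pm u" using pm_tot[of u w w'] assms(3) w'(2) by blast
  then show ?thesis using w' by blast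
qed

end

locale da = smp +
  fixes W :: "'w set"
  assumes WsubWW: "W \<subseteq> WW"
begin

definition avail where "avail R u = {w \<in> W. (u, w) \<notin> R}"
definition props where "props R = {(u, w). u \<in> U \<and> w \<in> avail R u \<and> (\<forall>w'\<in>avail R u. w' = w \<or> (w, w') \<in> Pm u)}"
definition hold where "hold R = {(u, w) \<in> props R. \<forall>u'. (u', w) \<in> props R \<longrightarrow> u' = u \<or> (u, u') \<in> Pw w}"
definition step where "step R = R \<union> (props R - hold R)"
definition Inv where "Inv R \<longleftrightarrow> R \<subseteq> U \<times> W \<and> (\<forall>u w. (u, w) \<in> R \<longrightarrow> (\<exists>h. (h, w) \<in> hold R \<and> (h, u) \<in> Pw w))"

lemma props_sub: "props R \<subseteq> U \<times> W"
  by (auto simp: props_def avail_def)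

lemma hold_exists:
  assumes "(u, w) \<in> props R"
  shows "\<exists>h. (h, w) \<in> hold R \<and> (h = u \<or> (h, u) \<in> Pw w)"
proof -
  let ?S = "{u'. (u', w) \<in> props R}"
  have sub: "?S \<subseteq> U" using props_sub by auto
  have wW: "w \<in> WW" using assms props_sub WsubWW by auto
  obtain h where h: "h \<in> ?S" "\<forall>y\<in>?S. y = h \<or> (h, y) \<in> Pw w"
    using best_exists[of ?S U "Pw w"] sub finite_subset[OF sub finU] assms pw[OF wW] by blast
  then have "(h, w) \<in> hold R" by (auto simp: hold_def)
  then show ?thesis using h assms by auto
qed

lemma hold_props: "(u, w) \<in> hold R \<Longrightarrow> (u, w) \<in> props (step R)"
  unfolding step_def props_def hold_def avail_def by auto

lemma hold_up:
  assumes "(h, w) \<in> hold R"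
  shows "\<exists>h'. (h', w) \<in> hold (step R) \<and> (h' = h \<or> (h', h) \<in> Pw w)"
  using hold_exists[OF hold_props[OF assms]] by blast

lemma Inv_step:
  assumes "Inv R" shows "Inv (step R)"
proof -
  have sub: "step R \<subseteq> U \<times> W" using assms props_sub by (auto simp: Inv_def step_def)
  have "\<exists>h. (h, w) \<in> hold (step R) \<and> (h, u) \<in> Pw w" if uw: "(u, w) \<in> step R" for u w
  proof -
    have wW: "w \<in> WW" using sub uw WsubWW by auto
    obtain h where h: "(h, w) \<in> hold R" "(h, u) \<in> Pw w"
    proof (cases "(u, w) \<in> R")
      case True
      then show ?thesis using that assms unfolding Inv_def by blast
    next
      case False
      then have p: "(u, w) \<in> props R" "(u, w) \<notin> hold R" using uw by (auto simp: step_def)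
      then obtain h where "(h, w) \<in> hold R" "h = u \<or> (h, u) \<in> Pw w" using hold_exists by blast
      then show ?thesis using that p by auto
    qed
    obtain h' where "(h', w) \<in> hold (step R)" "h' = h \<or> (h', h) \<in> Pw w" using hold_up[OF h(1)] by blast
    then show ?thesis using h pw_trans[OF wW] by blast
  qed
  then show ?thesis using sub by (auto simp: Inv_def)
qed

lemma fix_stable:
  assumes "Inv R" "step R = R"
  shows "stable U W Pm Pw (hold R)"
proof -
  have ph: "props R = hold R"
  proof -
    have "props R - hold R \<subseteq> R" using assms(2) unfolding step_def by blast
    moreover have "props R \<inter> R = {}" by (auto simp: props_def avail_def)
    moreover have "hold R \<subseteq> props R" by (auto simp: hold_def)
    ultimately show ?thesis by blast
  qed
  have sub: "hold R \<subseteq> U \<times> W" using props_sub ph by auto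
  have mm: "w = w'" if "(u, w) \<in> hold R" "(u, w') \<in> hold R" for u w w'
  proof -
    have "u \<in> U" using that sub by auto
    moreover have "(w' = w \<or> (w, w') \<in> Pm u)" "(w = w' \<or> (w', w) \<in> Pm u)"
      using that ph[symmetric] unfolding props_def by auto
    ultimately show ?thesis using pm_asym by blast
  qed
  have mw: "u = u'" if "(u, w) \<in> hold R" "(u', w) \<in> hold R" for u u' w
  proof -
    have "w \<in> WW" using that sub WsubWW by auto
    moreover have "u' = u \<or> (u, u') \<in> Pw w" "u = u' \<or> (u', u) \<in> Pw w"
      using that ph unfolding hold_def by auto
    ultimately show ?thesis using pw_asym by blast
  qed
  have mat: "is_matching U W (hold R)" using sub mm mw by (auto simp: is_matching_def)
  have nb: "\<not> blocking_pair Pm Pw (hold R) u w" if uU: "u \<in> U" and "w \<in> W" for u w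
  proof
    assume bp: "blocking_pair Pm Pw (hold R) u w"
    have wW: "w \<in> WW" using that WsubWW by auto
    show False
    proof (cases "(u, w) \<in> R")
      case True
      then obtain h where h: "(h, w) \<in> hold R" "(h, u) \<in> Pw w" using assms(1) unfolding Inv_def by blast
      then obtain x where "(x, w) \<in> hold R" "(u, x) \<in> Pw w" using bp by (auto simp: blocking_pair_def)
      then show False using h mw pw_asym[OF wW] by blast
    next
      case False
      then have wa: "w \<in> avail R u" using that by (auto simp: avail_def)
      have "avail R u \<subseteq> WW" using WsubWW by (auto simp: avail_def)
      moreover have "finite (avail R u)" using finite_subset[OF _ finW] calculation by blast
      ultimately obtain b where b: "b \<in> avail R u" "\<forall>y\<in>avail R u. y = b \<or> (b, y) \<in> Pm u"
        using best_exists[of "avail R u" WW "Pm u"] wa pm[OF uU] by blast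
      then have ub: "(u, b) \<in> hold R" using ph uU by (auto simp: props_def)
      then obtain b' where b': "(u, b') \<in> hold R" "(w, b') \<in> Pm u" using bp by (auto simp: blocking_pair_def)
      have "b' = b" using mm ub b' by blast
      moreover have "w \<noteq> b" using bp ub by (auto simp: blocking_pair_def)
      ultimately show False using b wa b' pm_asym[OF uU] by blast
    qed
  qed
  show ?thesis using mat nb by (auto simp: stable_def)
qed

lemma stable_exists: "\<exists>M. stable U W Pm Pw M"
proof -
  define R where "R n = (step ^^ n) {}" for n
  have RS: "R (Suc n) = step (R n)" for n by (simp add: R_def)
  have inv: "Inv (R n)" for n
  proof (induction n)
    case 0 then show ?case by (simp add: R_def Inv_def)
  next
    case (Suc n) then show ?case using Inv_step RS by simp
  qed
  have "finite W" using finite_subset[OF WsubWW finW] .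
  then have fin: "finite (U \<times> W)" using finU by simp
  have RUW: "R n \<subseteq> U \<times> W" for n using inv[of n] unfolding Inv_def by blast
  have "\<exists>n. R (Suc n) = R n"
  proof (rule ccontr)
    assume "\<nexists>n. R (Suc n) = R n"
    note nex = this
    have ps: "R n \<subset> R (Suc n)" for n
    proof -
      have "R n \<subseteq> R (Suc n)" unfolding RS step_def by (rule Un_upper1)
      moreover have "R (Suc n) \<noteq> R n" using nex by blast
      ultimately show ?thesis by blast
    qed
    have A1: "n \<le> card (R n)" for n
    proof (induction n)
      case (Suc n)
      have "finite (R (Suc n))" using finite_subset[OF RUW fin] .
      then have "card (R n) < card (R (Suc n))" using psubset_card_mono[OF _ ps] by blast
      then show ?case using Suc by simp
    qed simp
    have A2: "card (R n) \<le> card (U \<times> W)" for n using card_mono[OF fin RUW] .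
    have "Suc (card (U \<times> W)) \<le> card (U \<times> W)"
      using A1[of "Suc (card (U \<times> W))"] A2[of "Suc (card (U \<times> W))"] by linarith
    then show False by simp
  qed
  then obtain n where "step (R n) = R n" using RS by metis
  then show ?thesis using fix_stable[OF inv[of n]] by blast
qed

end



definition better :: "('m \<times> 'w) set \<Rightarrow> ('m \<times> 'w) set \<Rightarrow> ('m \<Rightarrow> ('w \<times> 'w) set) \<Rightarrow> 'm set" where
  "better M N Pm = {u. \<exists>w. (u, w) \<in> M \<and> (\<forall>w'. (u, w') \<in> N \<longrightarrow> (w, w') \<in> Pm u)}"

definition join :: "('m \<times> 'w) set \<Rightarrow> ('m \<times> 'w) set \<Rightarrow> ('m \<Rightarrow> ('w \<times> 'w) set) \<Rightarrow> ('m \<times> 'w) set" where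
  "join N M Pm = {(u, w) \<in> M. u \<in> better M N Pm} \<union> {(u, w) \<in> N. u \<notin> better M N Pm}"

locale jctx = smp +
  fixes W1 W2 :: "'w set" and M N :: "('m \<times> 'w) set"
  assumes W12: "W1 \<subseteq> W2" and W2W: "W2 \<subseteq> WW"
    and sM: "stable U W1 Pm Pw M" and sN: "stable U W2 Pm Pw N"
begin

abbreviation "A \<equiv> better M N Pm"
abbreviation "J \<equiv> join N M Pm"

lemma mM: "is_matching U W1 M" using sM by (simp add: stable_def)
lemma mN: "is_matching U W2 N" using sN by (simp add: stable_def)

lemma AU: "A \<subseteq> U" using mM by (auto simp: better_def is_matching_def)

lemma key:
  assumes "u \<in> A" "(u, w) \<in> M"
  shows "\<exists>u'. u' \<in> A \<and> (u', w) \<in> N \<and> (u', u) \<in> Pw w"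
proof -
  obtain w0 where w0: "(u, w0) \<in> M" "\<forall>w'. (u, w') \<in> N \<longrightarrow> (w0, w') \<in> Pm u"
    using assms by (auto simp: better_def)
  have "w0 = w" using mat_m[OF mM] w0 assms by blast
  have uw: "u \<in> U" "w \<in> W1" using mat_sub[OF mM assms(2)] by auto
  have w2: "w \<in> W2" using uw W12 by auto
  have wW: "w \<in> WW" using w2 W2W by auto
  have nN: "(u, w) \<notin> N" using w0 \<open>w0 = w\<close> pm_irr[OF uw(1)] by blast
  have "(\<forall>w'. (u, w') \<notin> N) \<or> (\<exists>w'. (u, w') \<in> N \<and> (w, w') \<in> Pm u)"
    using w0 \<open>w0 = w\<close> by blast
  then obtain u' where u': "(u', w) \<in> N" "(u', u) \<in> Pw w"
    using nb_rule[OF sN W2W uw(1) w2 nN] by blast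
  have u'U: "u' \<in> U" using mat_sub[OF mN u'(1)] by auto
  have nM: "(u', w) \<notin> M"
  proof
    assume "(u', w) \<in> M"
    then have "u' = u" using mat_w[OF mM] assms(2) by blast
    then show False using u' pw_irr[OF wW] by blast
  qed
  obtain w'' where w'': "(u', w'') \<in> M" "(w'', w) \<in> Pm u'"
    using nb_rule2[OF sM _ u'U uw(2) nM] W12 W2W assms(2) u'(2) by blast
  have "u' \<in> A"
    unfolding better_def using w'' u'(1) mat_m[OF mN u'(1)] by blast
  then show ?thesis using u' by blast
qed

definition g where "g u = (SOME u'. u' \<in> A \<and> (u', SOME w. (u, w) \<in> M) \<in> N)"

lemma g_props:
  assumes "u \<in> A"
  shows "g u \<in> A \<and> (g u, SOME w. (u, w) \<in> M) \<in> N \<and> (u, SOME w. (u, w) \<in> M) \<in> M"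
proof -
  have ex: "\<exists>w. (u, w) \<in> M" using assms by (auto simp: better_def)
  then have m: "(u, SOME w. (u, w) \<in> M) \<in> M" by (rule someI_ex)
  then obtain u' where u': "u' \<in> A" "(u', SOME w. (u, w) \<in> M) \<in> N" using key[OF assms] by blast
  have "g u \<in> A \<and> (g u, SOME w. (u, w) \<in> M) \<in> N" unfolding g_def
    by (rule someI[where P="\<lambda>x. x \<in> A \<and> (x, SOME w. (u, w) \<in> M) \<in> N" and x=u']) (use u' in blast)
  then show ?thesis using m by blast
qed

lemma g_surj: "g ` A = A"
proof (rule endo_inj_surj)
  show "finite A" using AU finite_subset finU by blast
  show "g ` A \<subseteq> A" using g_props by blast
  show "inj_on g A"
  proof
    fix x y assume xy: "x \<in> A" "y \<in> A" "g x = g y"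
    have "(SOME w. (x, w) \<in> M) = (SOME w. (y, w) \<in> M)"
      using g_props[OF xy(1)] g_props[OF xy(2)] xy(3) mat_m[OF mN] by metis
    then show "x = y" using g_props[OF xy(1)] g_props[OF xy(2)] mat_w[OF mM] by metis
  qed
qed

lemma NA_MA:
  assumes "u \<in> A" "(u, w) \<in> N"
  shows "\<exists>u'\<in>A. (u', w) \<in> M"
proof -
  obtain u' where u': "u' \<in> A" "u = g u'" using g_surj assms(1) by blast
  then have "(u, SOME w. (u', w) \<in> M) \<in> N" "(u', SOME w. (u', w) \<in> M) \<in> M" using g_props by auto
  then show ?thesis using u' mat_m[OF mN] assms(2) by metis
qed

lemma A_matched: "u \<in> A \<Longrightarrow> \<exists>w. (u, w) \<in> N"
  using g_surj g_props by (metis imageE)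

lemma M_matched: "(u, w) \<in> M \<Longrightarrow> \<exists>w'. (u, w') \<in> N"
  using A_matched unfolding better_def by blast

lemma J_cases: "(u, w) \<in> J \<longleftrightarrow> (u \<in> A \<and> (u, w) \<in> M) \<or> (u \<notin> A \<and> (u, w) \<in> N)"
  by (auto simp: join_def)

lemma J_m: "(u, w) \<in> J \<Longrightarrow> (u, w') \<in> J \<Longrightarrow> w = w'"
  using mat_m[OF mM] mat_m[OF mN] unfolding J_cases by blast

lemma J_w: "(u, w) \<in> J \<Longrightarrow> (u', w) \<in> J \<Longrightarrow> u = u'"
proof -
  have c: False if "u1 \<in> A" "(u1, w) \<in> M" "u2 \<notin> A" "(u2, w) \<in> N" for u1 u2 w
    using key[OF that(1,2)] mat_w[OF mN] that by blast
  show "(u, w) \<in> J \<Longrightarrow> (u', w) \<in> J \<Longrightarrow> u = u'"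
    using mat_w[OF mM] mat_w[OF mN] c unfolding J_cases by blast
qed

lemma J_match: "is_matching U W2 J"
proof -
  have "J \<subseteq> U \<times> W2"
  proof
    fix x assume x: "x \<in> J"
    obtain u w where uw: "x = (u, w)" by (cases x)
    then have "(u, w) \<in> M \<or> (u, w) \<in> N" using x J_cases by blast
    then show "x \<in> U \<times> W2" using mat_sub[OF mM, of u w] mat_sub[OF mN, of u w] W12 uw by blast
  qed
  then show ?thesis unfolding is_matching_def using J_m J_w by blast
qed

lemma J_claim:
  assumes uU: "u \<in> U" and w2: "w \<in> W2" and nJ: "(u, w) \<notin> J"
    and us: "(\<forall>w'. (u, w') \<notin> J) \<or> (\<exists>w'. (u, w') \<in> J \<and> (w, w') \<in> Pm u)"
  shows "\<exists>x. (x, w) \<in> J \<and> (x, u) \<in> Pw w"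
proof (cases "u \<in> A")
  case True
  then obtain m where m: "(u, m) \<in> M" "\<forall>w'. (u, w') \<in> N \<longrightarrow> (m, w') \<in> Pm u"
    by (auto simp: better_def)
  then have mJ: "(u, m) \<in> J" using True J_cases by blast
  then obtain w' where "(u, w') \<in> J" "(w, w') \<in> Pm u" using us by blast
  then have wm: "(w, m) \<in> Pm u" using J_m mJ by blast
  have nN: "(u, w) \<notin> N" using m wm pm_asym[OF uU] by blast
  have "(\<forall>w'. (u, w') \<notin> N) \<or> (\<exists>w'. (u, w') \<in> N \<and> (w, w') \<in> Pm u)"
    using m wm pm_trans[OF uU] by blast
  then obtain n0 where n0: "(n0, w) \<in> N" "(n0, u) \<in> Pw w" using nb_rule[OF sN W2W uU w2 nN] by blast
  show ?thesis
  proof (cases "n0 \<in> A")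
    case False then show ?thesis using n0 J_cases by blast
  next
    case True
    then obtain u'' where u'': "u'' \<in> A" "(u'', w) \<in> M" using NA_MA n0 by blast
    have w1: "w \<in> W1" using mat_sub[OF mM u''(2)] by auto
    have nM: "(u, w) \<notin> M" using m wm mat_m[OF mM] pm_irr[OF uU] by blast
    obtain y where "(y, w) \<in> M" "(y, u) \<in> Pw w"
      using nb_rule[OF sM _ uU w1 nM] W12 W2W m wm by blast
    then show ?thesis using u'' mat_w[OF mM] J_cases by blast
  qed
next
  case False
  have nN: "(u, w) \<notin> N" using nJ False J_cases by blast
  have usN: "(\<forall>w'. (u, w') \<notin> N) \<or> (\<exists>w'. (u, w') \<in> N \<and> (w, w') \<in> Pm u)"
    using us False J_cases by blast
  then obtain n0 where n0: "(n0, w) \<in> N" "(n0, u) \<in> Pw w" using nb_rule[OF sN W2W uU w2 nN] by blast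
  show ?thesis
  proof (cases "n0 \<in> A")
    case False then show ?thesis using n0 J_cases by blast
  next
    case True
    then obtain u'' where u'': "u'' \<in> A" "(u'', w) \<in> M" using NA_MA n0 by blast
    have w1: "w \<in> W1" using mat_sub[OF mM u''(2)] by auto
    have nM: "(u, w) \<notin> M" using u'' False mat_w[OF mM] by blast
    have "(\<forall>w'. (u, w') \<notin> M) \<or> (\<exists>w'. (u, w') \<in> M \<and> (w, w') \<in> Pm u)"
    proof (cases "\<exists>m. (u, m) \<in> M")
      case True
      then obtain m where m: "(u, m) \<in> M" by blast
      then obtain w' where w': "(u, w') \<in> N" "(m, w') \<notin> Pm u" using False unfolding better_def by blast
      then have "(w, w') \<in> Pm u" using usN mat_m[OF mN] by blast
      moreover have "m = w' \<or> (w', m) \<in> Pm u"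
        using pm_tot[OF uU, of m w'] w' mat_sub[OF mM m] mat_sub[OF mN w'(1)] W12 W2W by blast
      ultimately show ?thesis using m pm_trans[OF uU] by blast
    qed auto
    then obtain y where "(y, w) \<in> M" "(y, u) \<in> Pw w"
      using nb_rule[OF sM _ uU w1 nM] W12 W2W by blast
    then show ?thesis using u'' mat_w[OF mM] J_cases by blast
  qed
qed

lemma J_stable: "stable U W2 Pm Pw J"
  unfolding stable_def
proof (intro conjI J_match ballI notI)
  fix u w assume uU: "u \<in> U" and w2: "w \<in> W2" and bp: "blocking_pair Pm Pw J u w"
  have wW: "w \<in> WW" using w2 W2W by auto
  obtain x where x: "(x, w) \<in> J" "(x, u) \<in> Pw w"
    using J_claim[OF uU w2] bp unfolding blocking_pair_def by blast
  then obtain x' where "(x', w) \<in> J" "(u, x') \<in> Pw w" using bp unfolding blocking_pair_def by blast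
  then show False using x J_w pw_asym[OF wW] by blast
qed

lemma J_dom: "(u, w) \<in> J \<Longrightarrow> (u, n) \<in> N \<Longrightarrow> n = w \<or> (w, n) \<in> Pm u"
  unfolding J_cases better_def using mat_m[OF mM] mat_m[OF mN] by blast

lemma J_drop: "(u, w) \<in> M \<Longrightarrow> (u, w) \<notin> J \<Longrightarrow> \<exists>w'. (u, w') \<in> N \<and> (w', w) \<in> Pm u"
proof -
  assume a: "(u, w) \<in> M" "(u, w) \<notin> J"
  then have nA: "u \<notin> A" using J_cases by blast
  then obtain w' where w': "(u, w') \<in> N" "(w, w') \<notin> Pm u" using a unfolding better_def by blast
  have "w' \<noteq> w" using w' a nA J_cases by blast
  then have "(w', w) \<in> Pm u" using pm_tot[of u w w'] w' mat_sub[OF mM a(1)] mat_sub[OF mN w'(1)] W12 W2W by blast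
  then show ?thesis using w' by blast
qed

end



lemma (in smp) men_opt_exists:
  assumes WsW: "W \<subseteq> WW"
  shows "\<exists>M. men_optimal U W Pm Pw M"
proof -
  interpret da U WW Pm Pw W using WsW by unfold_locales
  define S where "S = {M. stable U W Pm Pw M}"
  have finUW: "finite (U \<times> WW)" using finU finW by blast
  have "S \<subseteq> Pow (U \<times> W)" by (auto simp: S_def stable_def is_matching_def)
  moreover have "finite (Pow (U \<times> W))" using finU finW WsW finite_subset by blast
  ultimately have finS: "finite S" using finite_subset by blast
  have neS: "S \<noteq> {}" using stable_exists by (auto simp: S_def)
  define Set where "Set M = {(u, w) \<in> U \<times> WW. \<exists>w0. (u, w0) \<in> M \<and> (w0 = w \<or> (w0, w) \<in> Pm u)}" for M
  define f where "f M = card (Set M)" for M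
  have "Max (f ` S) \<in> f ` S" using Max_in[of "f ` S"] finS neS by blast
  then obtain Mx where Mx: "Mx \<in> S" "f Mx = Max (f ` S)" by (metis imageE)
  have maxi: "f M \<le> f Mx" if "M \<in> S" for M using Mx that finS by simp
  have sMx: "stable U W Pm Pw Mx" using Mx by (simp add: S_def)
  have "\<forall>u w'. (u, w') \<in> M' \<longrightarrow> (\<exists>w. (u, w) \<in> Mx \<and> (w = w' \<or> (w, w') \<in> Pm u))"
    if sM': "stable U W Pm Pw M'" for M'
  proof -
    interpret j: jctx U WW Pm Pw W W M' Mx
      by (intro jctx.intro smp_axioms jctx_axioms.intro sM' sMx WsW order_refl)
    have Aempty: "j.A = {}"
    proof (rule ccontr)
      assume "j.A \<noteq> {}"
      then obtain u where uA: "u \<in> j.A" by blast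
      then obtain m where m: "(u, m) \<in> M'" "\<forall>w'. (u, w') \<in> Mx \<longrightarrow> (m, w') \<in> Pm u"
        by (auto simp: better_def)
      have uU: "u \<in> U" and mW: "m \<in> W" using mat_sub[OF j.mM m(1)] by auto
      have sub: "Set Mx \<subseteq> Set j.J"
      proof
        fix x assume "x \<in> Set Mx"
        then obtain v w w0 where x: "x = (v, w)" "v \<in> U" "w \<in> WW" "(v, w0) \<in> Mx" "w0 = w \<or> (w0, w) \<in> Pm v"
          by (auto simp: Set_def)
        obtain j where jJ: "(v, j) \<in> j.J"
          using x(4) j.J_cases unfolding better_def by blast
        then have "w0 = j \<or> (j, w0) \<in> Pm v" using j.J_dom x(4) by blast
        then have "j = w \<or> (j, w) \<in> Pm v" using x(5) pm_trans[OF x(2)] by blast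
        then show "x \<in> Set j.J" using x jJ by (auto simp: Set_def)
      qed
      have inJ: "(u, m) \<in> Set j.J" using m uA j.J_cases uU mW WsW by (auto simp: Set_def)
      have notin: "(u, m) \<notin> Set Mx"
        using m pm_asym[OF uU] pm_irr[OF uU] by (auto simp: Set_def)
      have "Set Mx \<subset> Set j.J" using sub inJ notin by blast
      moreover have "finite (Set j.J)" using finUW by (auto simp: Set_def intro: finite_subset)
      ultimately have "f Mx < f j.J" unfolding f_def by (rule psubset_card_mono[rotated])
      moreover have "j.J \<in> S" using j.J_stable by (simp add: S_def)
      ultimately show False using maxi[of j.J] by linarith
    qed
    show ?thesis
    proof (intro allI impI)
      fix u w' assume uw': "(u, w') \<in> M'"
      have uU: "u \<in> U" and w'W: "w' \<in> W" using mat_sub[OF j.mM uw'] by auto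
      then obtain w where w: "(u, w) \<in> Mx" "(w', w) \<notin> Pm u" using Aempty uw' unfolding better_def by blast
      have "w \<in> W" using mat_sub[OF j.mN w(1)] by auto
      then show "\<exists>w. (u, w) \<in> Mx \<and> (w = w' \<or> (w, w') \<in> Pm u)"
        using w pm_tot[OF uU, of w w'] w'W WsW by blast
    qed
  qed
  then show ?thesis using sMx by (auto simp: men_optimal_def)
qed

fun Mseq :: "('m \<times> 'w) set \<Rightarrow> (nat \<Rightarrow> ('m \<times> 'w) set) \<Rightarrow> ('m \<Rightarrow> ('w \<times> 'w) set) \<Rightarrow> nat \<Rightarrow> ('m \<times> 'w) set" where
  "Mseq Ms Mo Pm 0 = Ms"
| "Mseq Ms Mo Pm (Suc t) = (if t = 0 then Ms else join (Mo (Suc t)) (Mseq Ms Mo Pm t) Pm)"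

theorem corollary1:
  fixes T :: nat and U :: "'m set" and W :: "nat \<Rightarrow> 'w set"
    and Pm :: "'m \<Rightarrow> ('w \<times> 'w) set" and Pw :: "'w \<Rightarrow> ('m \<times> 'm) set"
  assumes "T \<ge> 2"
    and "finite U" and "finite (W T)"
    and "\<And>t. 1 \<le> t \<Longrightarrow> t < T \<Longrightarrow> W t \<subseteq> W (Suc t)"
    and "\<And>u. u \<in> U \<Longrightarrow> strict_linear_order_on (W T) (Pm u) \<and> Pm u \<subseteq> W T \<times> W T"
    and "\<And>w. w \<in> W T \<Longrightarrow> strict_linear_order_on U (Pw w) \<and> Pw w \<subseteq> U \<times> U"
  shows "\<exists>M. tasmp_optimal T U W Pm Pw M \<and> men_optimal U (W 1) Pm Pw (M 1)"
proof -
  have WT: "W t \<subseteq> W T" if "1 \<le> t" "t \<le> T" for t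
  proof -
    have "\<forall>k. t + k \<le> T \<longrightarrow> W t \<subseteq> W (t + k)"
    proof (intro allI)
      fix k show "t + k \<le> T \<longrightarrow> W t \<subseteq> W (t + k)"
      proof (induction k)
        case (Suc k)
        show ?case
        proof
          assume h: "t + Suc k \<le> T"
          then have "W t \<subseteq> W (t + k)" "t + k < T" "1 \<le> t + k" using Suc.IH that by auto
          then show "W t \<subseteq> W (t + Suc k)" using assms(4)[of "t + k"] by auto
        qed
      qed simp
    qed
    moreover have "t + (T - t) \<le> T" "t + (T - t) = T" using that by simp_all
    ultimately show ?thesis by metis
  qed
  have smpI: "smp U (W T) Pm Pw" using assms(2,3,5,6) by unfold_locales auto
  interpret smp U "W T" Pm Pw by (rule smpI)
  have jI: "jctx U (W T) Pm Pw W1 W2 M N"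
    if "W1 \<subseteq> W2" "W2 \<subseteq> W T" "stable U W1 Pm Pw M" "stable U W2 Pm Pw N" for W1 W2 M N
    using smpI that by (simp add: jctx_def jctx_axioms_def)
  have ex: "\<exists>S. stable U (W t) Pm Pw S" if "1 \<le> t" "t \<le> T" for t
  proof -
    interpret da U "W T" Pm Pw "W t" using WT[OF that] by unfold_locales
    show ?thesis by (rule stable_exists)
  qed
  define M0 where "M0 t = (SOME S. stable U (W t) Pm Pw S)" for t
  have "tasmp_feasible T U W Pm Pw M0"
    unfolding tasmp_feasible_def M0_def using ex by (auto intro: someI_ex)
  then obtain Mo where Mo: "tasmp_feasible T U W Pm Pw Mo"
    "\<forall>M. tasmp_feasible T U W Pm Pw M \<longrightarrow> tasmp_cost T Mo \<le> tasmp_cost T M"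
    using ex_has_least_nat[where m = "tasmp_cost T" and P = "tasmp_feasible T U W Pm Pw"] by blast
  have sMo: "stable U (W t) Pm Pw (Mo t)" if "1 \<le> t" "t \<le> T" for t
    using Mo(1) that by (auto simp: tasmp_feasible_def)
  obtain Ms where Ms: "men_optimal U (W 1) Pm Pw Ms"
    using men_opt_exists[OF WT[of 1]] assms(1) by force
  define M' where "M' = Mseq Ms Mo Pm"
  have M'1: "M' 1 = Ms" by (simp add: M'_def)
  have M'S: "M' (Suc t) = join (Mo (Suc t)) (M' t) Pm" if "1 \<le> t" for t
    using that by (simp add: M'_def)
  have sM': "stable U (W t) Pm Pw (M' t)" if "1 \<le> t" "t \<le> T" for t
    using that
  proof (induction t)
    case (Suc t)
    show ?case
    proof (cases "t = 0")
      case True then show ?thesis using Ms M'1 by (simp add: men_optimal_def)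
    next
      case False
      then have t1: "1 \<le> t" by simp
      have tT: "t < T" "t \<le> T" using Suc by simp_all
      interpret j: jctx U "W T" Pm Pw "W t" "W (Suc t)" "M' t" "Mo (Suc t)"
        by (rule jI[OF assms(4)[OF t1 tT(1)] WT[OF _ Suc.prems(2)] Suc.IH[OF t1 tT(2)] sMo[OF _ Suc.prems(2)]]) simp_all
      show ?thesis using j.J_stable M'S[OF t1] by simp
    qed
  qed simp
  have dom: "m = w \<or> (w, m) \<in> Pm u"
    if "1 \<le> t" "t \<le> T" "(u, w) \<in> M' t" "(u, m) \<in> Mo t" for t u w m
  proof (cases "t = 1")
    case True
    have "(u, m) \<in> Mo 1" using that(4) True by simp
    moreover have "stable U (W 1) Pm Pw (Mo 1)" using sMo assms(1) by simp
    ultimately obtain w0 where w0: "(u, w0) \<in> Ms" "w0 = m \<or> (w0, m) \<in> Pm u"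
      using Ms unfolding men_optimal_def by blast
    have mMs: "is_matching U (W 1) Ms" using Ms by (simp add: men_optimal_def stable_def)
    have "(u, w) \<in> Ms" using that(3) True M'1 by simp
    then have "w0 = w" using mat_m[OF mMs w0(1)] by blast
    then show ?thesis using w0(2) by blast
  next
    case False
    then obtain t' where t': "t = Suc t'" "1 \<le> t'" using \<open>1 \<le> t\<close> by (cases t) auto
    have tT: "t' < T" "t' \<le> T" using t' that by auto
    interpret j: jctx U "W T" Pm Pw "W t'" "W t" "M' t'" "Mo t"
      by (rule jI[OF assms(4)[OF t'(2) tT(1), folded t'(1)] WT[OF that(1,2)] sM'[OF t'(2) tT(2)] sMo[OF that(1,2)]])
    have "(u, w) \<in> j.J" using that(3) M'S[OF t'(2)] t'(1) by simp
    then show ?thesis using j.J_dom that(4) by blast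
  qed
  have card_le: "card (M' t - M' (Suc t)) \<le> card (Mo t - Mo (Suc t))" if t: "t \<in> {1..<T}" for t
  proof -
    have t1: "1 \<le> t" "t \<le> T" "Suc t \<le> T" using t by auto
    have tT: "t < T" using t by auto
    interpret j1: jctx U "W T" Pm Pw "W t" "W (Suc t)" "M' t" "Mo (Suc t)"
      by (rule jI[OF assms(4)[OF t1(1) tT] WT[OF _ t1(3)] sM'[OF t1(1,2)] sMo[OF _ t1(3)]]) simp_all
    interpret j2: jctx U "W T" Pm Pw "W t" "W t" "M' t" "Mo t"
      by (rule jI[OF order_refl WT[OF t1(1,2)] sM'[OF t1(1,2)] sMo[OF t1(1,2)]])
    have J: "M' (Suc t) = j1.J" using M'S[OF t1(1)] by simp
    have img: "fst ` (M' t - M' (Suc t)) \<subseteq> fst ` (Mo t - Mo (Suc t))"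
    proof
      fix u assume "u \<in> fst ` (M' t - M' (Suc t))"
      then obtain w where uw: "(u, w) \<in> M' t" "(u, w) \<notin> j1.J" using J by auto
      have uU: "u \<in> U" using mat_sub[OF j1.mM uw(1)] by auto
      obtain w' where w': "(u, w') \<in> Mo (Suc t)" "(w', w) \<in> Pm u" using j1.J_drop uw by blast
      obtain m where m: "(u, m) \<in> Mo t" using j2.M_matched uw(1) by blast
      have "m = w \<or> (w, m) \<in> Pm u" using dom[OF t1(1,2) uw(1) m] .
      moreover have False if "(u, m) \<in> Mo (Suc t)" "m = w \<or> (w, m) \<in> Pm u"
      proof -
        have "m = w'" using mat_m[OF j1.mN that(1) w'(1)] .
        then show False using that(2) w'(2) pm_irr[OF uU, of w] pm_asym[OF uU, of w m] by blast
      qed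
      ultimately have "(u, m) \<notin> Mo (Suc t)" by blast
      then show "u \<in> fst ` (Mo t - Mo (Suc t))" using m by force
    qed
    have finMo: "finite (Mo t)"
    proof -
      have "Mo t \<subseteq> U \<times> W T" using j2.mN WT[OF t1(1,2)] by (auto simp: is_matching_def)
      then show ?thesis using finite_subset assms(2,3) by (meson finite_SigmaI)
    qed
    have "inj_on fst (M' t - M' (Suc t))"
      using mat_m[OF j1.mM] by (auto simp: inj_on_def)
    then have "card (M' t - M' (Suc t)) = card (fst ` (M' t - M' (Suc t)))" by (simp add: card_image)
    also have "\<dots> \<le> card (fst ` (Mo t - Mo (Suc t)))" using img finMo by (intro card_mono) auto
    also have "\<dots> \<le> card (Mo t - Mo (Suc t))" using finMo by (intro card_image_le) auto
    finally show ?thesis .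
  qed
  have "tasmp_cost T M' \<le> tasmp_cost T Mo"
    unfolding tasmp_cost_def using card_le by (intro sum_mono) auto
  moreover have feas: "tasmp_feasible T U W Pm Pw M'" using sM' by (auto simp: tasmp_feasible_def)
  ultimately have "tasmp_optimal T U W Pm Pw M'"
    using Mo(2) unfolding tasmp_optimal_def using order_trans by blast
  then show ?thesis using M'1 Ms by auto
qed

end
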